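(* Let $X$ be a dendric shift over $\mathcal{A}_3=\{1,2,3\}$ and let $Y$ be the image of $X$ under a morphism $\sigma\in\mathcal{S}_3$. Then $Y$ is dendric if and only if $\sigma\in\mathrm{DP}(X)$.
   Context: A shift space over $\mathcal{A}$ is a closed shift-invariant $X\subseteq\mathcal{A}^{\mathbb{Z}}$ in which all letters occur, with factor set $\mathcal{L}(X)$. For $w\in\mathcal{L}(X)$, $\mathcal{E}_X(w)$ is the bipartite graph with left vertices $\{a:aw\in\mathcal{L}(X)\}$, right vertices $\{b:wb\in\mathcal{L}(X)\}$, edges $\{a,b\}$ for $awb\in\mathcal{L}(X)$; $w$ is bispecial if it has at least two left and two right vertices, dendric if $\mathcal{E}_X(w)$ is a tree; $X$ is dendric if all its factors are dendric. $\mathcal{S}_3=\{\alpha,\beta,\gamma,\eta\}\cup\{\delta^{(k)},\zeta^{(k)}:k\ge1\}$ with $\alpha:1\mapsto1,2\mapsto12,3\mapsto13$; $\beta:1\mapsto1,2\mapsto12,3\mapsto132$; $\gamma:1\mapsto1,2\mapsto12,3\mapsto123$; $\delta^{(k)}:1\mapsto1,2\mapsto123^k,3\mapsto123^{k+1}$; $\zeta^{(k)}:1\mapsto13^k,2\mapsto12,3\mapsto13^{k+1}$; $\eta:1\mapsto13,2\mapsto12,3\mapsto123$. The image of $X$ under $\sigma$ is $Y=\{S^k\sigma(x):x\in X,0\le k<|\sigma(x_0)|\}$. For non-empty $u\in\mathcal{L}(Y)$ containing $1$ there is a unique triple $(s,v,p)$, $v\in\mathcal{L}(X)$, $u=s\sigma(v)p$,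 with $s$ a proper suffix of $\sigma(a)$ and $p$ a non-empty prefix of $\sigma(b)$ for some $a,b$ with $avb\in\mathcal{L}(X)$; $u$ is an extended image of $v$. $\mathrm{DP}(X)$ is the set of $\sigma\in\mathcal{S}_3$ such that for every $v\in\mathcal{L}(X)$, every bispecial extended image of $v$ under $\sigma$ is dendric in $Y$. *)

theory Defs
  imports "HOL-Analysis.Analysis" "HOL-Library.Sublist"
begin

text \<open>Letters are natural numbers; the alphabet A3 is {1,2,3}. Bi-infinite
sequences are functions int => nat, with the product (pointwise) topology
where nat carries its (discrete) standard topology.\<close>

definition A3 :: "nat set" where "A3 = {1, 2, 3}"

definition shift :: "(int \<Rightarrow> nat) \<Rightarrow> (int \<Rightarrow> nat)" where
  "shift x = (\<lambda>n. x (n + 1))"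

definition shift_space :: "nat set \<Rightarrow> (int \<Rightarrow> nat) set \<Rightarrow> bool" where
  "shift_space A X \<longleftrightarrow>
     X \<subseteq> {x. \<forall>n. x n \<in> A} \<and> closed X \<and> shift ` X = X \<and>
     (\<forall>a\<in>A. \<exists>x\<in>X. \<exists>n. x n = a)"

text \<open>Factor set (language) of a set of bi-infinite sequences (includes the empty word).\<close>
definition lang :: "(int \<Rightarrow> nat) set \<Rightarrow> nat list set" where
  "lang X = {w. \<exists>x\<in>X. \<exists>i::int. w = map (\<lambda>j. x (i + int j)) [0..<length w]}"

definition left_ext :: "(int \<Rightarrow> nat) set \<Rightarrow> nat list \<Rightarrow> nat set" where
  "left_ext X w = {a. a # w \<in> lang X}"

definition right_ext :: "(int \<Rightarrow> nat) set \<Rightarrow> nat list \<Rightarrow> nat set" where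
  "right_ext X w = {b. w @ [b] \<in> lang X}"

text \<open>Vertices of the bipartite extension graph: left copies Inl a, right copies Inr b.\<close>
definition ext_vertices :: "(int \<Rightarrow> nat) set \<Rightarrow> nat list \<Rightarrow> (nat + nat) set" where
  "ext_vertices X w = Inl ` left_ext X w \<union> Inr ` right_ext X w"

definition ext_edges :: "(int \<Rightarrow> nat) set \<Rightarrow> nat list \<Rightarrow> ((nat + nat) \<times> (nat + nat)) set" where
  "ext_edges X w = {(Inl a, Inr b) | a b. [a] @ w @ [b] \<in> lang X}
                 \<union> {(Inr b, Inl a) | a b. [a] @ w @ [b] \<in> lang X}"

text \<open>Simple undirected graph given by vertex set V and symmetric adjacency E.\<close>
definition graph_connected :: "'v set \<Rightarrow> ('v \<times> 'v) set \<Rightarrow> bool" where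
  "graph_connected V E \<longleftrightarrow> V \<noteq> {} \<and> (\<forall>u\<in>V. \<forall>v\<in>V. (u, v) \<in> (E \<inter> (V \<times> V))\<^sup>*)"

definition graph_has_cycle :: "'v set \<Rightarrow> ('v \<times> 'v) set \<Rightarrow> bool" where
  "graph_has_cycle V E \<longleftrightarrow>
     (\<exists>cs. length cs \<ge> 3 \<and> distinct cs \<and> set cs \<subseteq> V \<and>
           (\<forall>i<length cs. (cs ! i, cs ! ((i + 1) mod length cs)) \<in> E))"

definition graph_tree :: "'v set \<Rightarrow> ('v \<times> 'v) set \<Rightarrow> bool" where
  "graph_tree V E \<longleftrightarrow> graph_connected V E \<and> \<not> graph_has_cycle V E"

definition dendric_word :: "(int \<Rightarrow> nat) set \<Rightarrow> nat list \<Rightarrow> bool" where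
  "dendric_word X w \<longleftrightarrow> graph_tree (ext_vertices X w) (ext_edges X w)"

definition bispecial :: "(int \<Rightarrow> nat) set \<Rightarrow> nat list \<Rightarrow> bool" where
  "bispecial X w \<longleftrightarrow> w \<in> lang X \<and> card (left_ext X w) \<ge> 2 \<and> card (right_ext X w) \<ge> 2"

definition dendric :: "(int \<Rightarrow> nat) set \<Rightarrow> bool" where
  "dendric X \<longleftrightarrow> (\<forall>w\<in>lang X. dendric_word X w)"

type_synonym morph = "nat \<Rightarrow> nat list"

definition mor_alpha :: morph where
  "mor_alpha n = (if n = 1 then [1] else if n = 2 then [1,2] else if n = 3 then [1,3] else [])"
definition mor_beta :: morph where
  "mor_beta n = (if n = 1 then [1] else if n = 2 then [1,2] else if n = 3 then [1,3,2] else [])"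
definition mor_gamma :: morph where
  "mor_gamma n = (if n = 1 then [1] else if n = 2 then [1,2] else if n = 3 then [1,2,3] else [])"
definition mor_delta :: "nat \<Rightarrow> morph" where
  "mor_delta k n = (if n = 1 then [1] else if n = 2 then [1,2] @ replicate k 3
                    else if n = 3 then [1,2] @ replicate (k+1) 3 else [])"
definition mor_zeta :: "nat \<Rightarrow> morph" where
  "mor_zeta k n = (if n = 1 then 1 # replicate k 3 else if n = 2 then [1,2]
                   else if n = 3 then 1 # replicate (k+1) 3 else [])"
definition mor_eta :: morph where
  "mor_eta n = (if n = 1 then [1,3] else if n = 2 then [1,2] else if n = 3 then [1,2,3] else [])"

definition S3 :: "morph set" where
  "S3 = {mor_alpha, mor_beta, mor_gamma, mor_eta}
        \<union> {mor_delta k | k. k \<ge> 1} \<union> {mor_zeta k | k. k \<ge> 1}"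

definition mor_word :: "morph \<Rightarrow> nat list \<Rightarrow> nat list" where
  "mor_word \<sigma> v = concat (map \<sigma> v)"

text \<open>Position in sigma(x) at which the block sigma(x_i) starts (block of x_0 starts at 0).\<close>
definition cum :: "morph \<Rightarrow> (int \<Rightarrow> nat) \<Rightarrow> int \<Rightarrow> int" where
  "cum \<sigma> x i = (if i \<ge> 0 then (\<Sum>j\<in>{0..<i}. int (length (\<sigma> (x j))))
                 else - (\<Sum>j\<in>{i..<0}. int (length (\<sigma> (x j)))))"

text \<open>The bi-infinite sequence sigma(x) = ... sigma(x_{-1}) . sigma(x_0) sigma(x_1) ...\<close>
definition mor_seq :: "morph \<Rightarrow> (int \<Rightarrow> nat) \<Rightarrow> (int \<Rightarrow> nat)" where
  "mor_seq \<sigma> x n =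
     (let i = (THE i. cum \<sigma> x i \<le> n \<and> n < cum \<sigma> x (i + 1))
      in \<sigma> (x i) ! nat (n - cum \<sigma> x i))"

definition image_shift :: "morph \<Rightarrow> (int \<Rightarrow> nat) set \<Rightarrow> (int \<Rightarrow> nat) set" where
  "image_shift \<sigma> X = {(shift ^^ k) (mor_seq \<sigma> x) | x k. x \<in> X \<and> k < length (\<sigma> (x 0))}"

text \<open>u is an extended image of v: u = s sigma(v) p with s a proper suffix of sigma(a),
p a non-empty prefix of sigma(b), a v b in L(X) (and u in L(Y)).\<close>
definition ext_image :: "(int \<Rightarrow> nat) set \<Rightarrow> morph \<Rightarrow> nat list \<Rightarrow> nat list \<Rightarrow> bool" where
  "ext_image X \<sigma> v u \<longleftrightarrow> u \<in> lang (image_shift \<sigma> X) \<and>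
     (\<exists>s p a b. [a] @ v @ [b] \<in> lang X \<and> strict_suffix s (\<sigma> a) \<and>
                prefix p (\<sigma> b) \<and> p \<noteq> [] \<and> u = s @ mor_word \<sigma> v @ p)"

definition DP :: "(int \<Rightarrow> nat) set \<Rightarrow> morph set" where
  "DP X = {\<sigma> \<in> S3. \<forall>v\<in>lang X. \<forall>u. ext_image X \<sigma> v u \<and> bispecial (image_shift \<sigma> X) u
                                      \<longrightarrow> dendric_word (image_shift \<sigma> X) u}"

end

theory Submission
  imports Defs
begin

definition win :: "(int \<Rightarrow> nat) \<Rightarrow> int \<Rightarrow> nat \<Rightarrow> nat list" where
  "win f i L = map (\<lambda>j. f (i + int j)) [0..<L]"

lemma win_length[simp]: "length (win f i L) = L" by (simp add: win_def)
lemma win_nth[simp]: "j < L \<Longrightarrow> win f i L ! j = f (i + int j)" by (simp add: win_def)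

lemma lang_win: "lang Z = {w. \<exists>x\<in>Z. \<exists>i. w = win x i (length w)}"
  by (simp add: lang_def win_def)

lemma win_append: "win f i (A + B) = win f i A @ win f (i + int A) B"
  by (rule nth_equalityI) (auto simp: nth_append add.assoc)

lemma win_Suc: "win f i (Suc L) = f i # win f (i+1) L"
  by (rule nth_equalityI) (auto simp: nth_Cons ac_simps split: nat.splits)

lemma win_Suc2: "win f i (Suc L) = win f i L @ [f (i + int L)]"
  using win_append[of f i L 1] by (simp add: win_def)

lemma sublist_win:
  assumes "sublist w (win f a N)" shows "\<exists>i. w = win f i (length w)"
proof -
  obtain ps ss where e: "win f a N = ps @ w @ ss" using assms by (auto simp: sublist_def)
  have "N = length ps + length w + length ss" using arg_cong[OF e, of length] by simp
  have "w = win f (a + int (length ps)) (length w)"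
  proof (rule nth_equalityI)
    fix j assume "j < length w"
    hence "(ps @ w @ ss) ! (length ps + j) = w ! j" by (simp add: nth_append)
    moreover have "win f a N ! (length ps + j) = f (a + int (length ps) + int j)"
      using \<open>j < length w\<close> \<open>N = _\<close> by (simp add: add.assoc)
    ultimately show "w ! j = win f (a + int (length ps)) (length w) ! j"
      using e \<open>j < length w\<close> by simp
  qed simp
  thus ?thesis by blast
qed

lemma lang_sublist: "u \<in> lang Z \<Longrightarrow> sublist w u \<Longrightarrow> w \<in> lang Z"
proof -
  assume "u \<in> lang Z" "sublist w u"
  then obtain x i where "x \<in> Z" "u = win x i (length u)" by (auto simp: lang_win)
  thus ?thesis using sublist_win[of w x i "length u"] \<open>sublist w u\<close> by (auto simp: lang_win)
qed

lemma lang_append: "u @ v \<in> lang Z \<Longrightarrow> u \<in> lang Z \<and> v \<in> lang Z"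
  using lang_sublist by blast

lemma lang_extend:
  assumes "w \<in> lang Z" shows "\<exists>a b. [a] @ w @ [b] \<in> lang Z"
proof -
  obtain x i where x: "x \<in> Z" "w = win x i (length w)" using assms by (auto simp: lang_win)
  have "win x (i - 1) (Suc (length w) + 1) = [x (i - 1)] @ w @ [x (i + int (length w))]"
    by (subst win_append, subst win_Suc) (simp add: x(2)[symmetric], simp add: win_def)
  hence "[x (i - 1)] @ w @ [x (i + int (length w))] \<in> lang Z"
    unfolding lang_win using x(1) by (intro CollectI bexI[of _ x] exI[of _ "i - 1"]) (simp_all add: x(2)[symmetric])
  thus ?thesis by blast
qed

lemma left_ext_alt: "w \<in> lang Z \<Longrightarrow> left_ext Z w = {a. \<exists>b. [a] @ w @ [b] \<in> lang Z}"
  unfolding left_ext_def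
proof safe
  fix a assume "a # w \<in> lang Z"
  then obtain a' b where "[a'] @ (a # w) @ [b] \<in> lang Z" using lang_extend by blast
  hence "[a] @ w @ [b] \<in> lang Z" using lang_append[of "[a']"] by simp
  thus "\<exists>b. [a] @ w @ [b] \<in> lang Z" by blast
next
  fix a b assume "[a] @ w @ [b] \<in> lang Z"
  thus "a # w \<in> lang Z" using lang_append[of "a # w" "[b]"] by simp
qed

lemma right_ext_alt: "w \<in> lang Z \<Longrightarrow> right_ext Z w = {b. \<exists>a. [a] @ w @ [b] \<in> lang Z}"
  unfolding right_ext_def
proof safe
  fix b assume "w @ [b] \<in> lang Z"
  then obtain a b' where "[a] @ (w @ [b]) @ [b'] \<in> lang Z" using lang_extend by blast
  hence "[a] @ w @ [b] \<in> lang Z" using lang_append[of "[a] @ w @ [b]" "[b']"] by simp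
  thus "\<exists>a. [a] @ w @ [b] \<in> lang Z" by blast
next
  fix a b assume "[a] @ w @ [b] \<in> lang Z"
  thus "w @ [b] \<in> lang Z" using lang_append[of "[a]" "w @ [b]"] by simp
qed


lemma cycle_card:
  assumes "graph_has_cycle V E" "finite V" shows "card V \<ge> 3"
proof -
  obtain cs where "length cs \<ge> 3" "distinct cs" "set cs \<subseteq> V" using assms(1) by (auto simp: graph_has_cycle_def)
  hence "card (set cs) \<ge> 3" by (simp add: distinct_card)
  thus ?thesis using card_mono[OF assms(2) \<open>set cs \<subseteq> V\<close>] by linarith
qed

lemma tree_single: "graph_tree {v} E"
  unfolding graph_tree_def graph_connected_def using cycle_card[of "{v}" E] by auto

lemma idx_pred:
  fixes i n :: nat assumes "i < n" "n \<ge> 3"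
  shows "\<exists>p<n. (p + 1) mod n = i \<and> p \<noteq> (i + 1) mod n"
proof (cases "i = 0")
  case True thus ?thesis using assms by (intro exI[of _ "n - 1"]) auto
next
  case False
  show ?thesis
  proof (cases "i = n - 1")
    case True thus ?thesis using assms False by (intro exI[of _ "i - 1"]) auto
  next
    case F2: False
    thus ?thesis using assms False by (intro exI[of _ "i - 1"]) auto
  qed
qed

lemma leaf_add:
  assumes symE: "\<And>a b. (a, b) \<in> E \<Longrightarrow> (b, a) \<in> E"
    and tr: "graph_tree V E" and u: "u \<in> V" and vu: "(v, u) \<in> E"
    and uniq: "\<And>w. w \<in> V \<Longrightarrow> (v, w) \<in> E \<Longrightarrow> w = u"
    and vV: "v \<notin> V"
  shows "graph_tree (insert v V) E"
proof -
  let ?R = "E \<inter> (V \<times> V)" and ?R' = "E \<inter> (insert v V \<times> insert v V)"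
  have mono: "(a, b) \<in> ?R\<^sup>* \<Longrightarrow> (a, b) \<in> ?R'\<^sup>*" for a b
    by (erule rtrancl_mono[THEN subsetD, rotated]) auto
  have con: "\<forall>a\<in>V. \<forall>b\<in>V. (a, b) \<in> ?R\<^sup>*" using tr by (auto simp: graph_tree_def graph_connected_def)
  have vu': "(v, u) \<in> ?R'" "(u, v) \<in> ?R'" using vu symE u by auto
  have "graph_connected (insert v V) E"
    unfolding graph_connected_def
  proof (intro conjI ballI)
    fix a b assume a: "a \<in> insert v V" and b: "b \<in> insert v V"
    show "(a, b) \<in> ?R'\<^sup>*"
    proof (cases "a = v")
      case True
      show ?thesis
      proof (cases "b = v")
        case True thus ?thesis using \<open>a = v\<close> by simp
      next
        case False hence "b \<in> V" using b by simp
        hence "(u, b) \<in> ?R'\<^sup>*" using con u mono by blast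
        thus ?thesis using vu' \<open>a = v\<close> by (meson converse_rtrancl_into_rtrancl)
      qed
    next
      case False hence aV: "a \<in> V" using a by simp
      show ?thesis
      proof (cases "b = v")
        case True
        have "(a, u) \<in> ?R'\<^sup>*" using con u mono aV by blast
        thus ?thesis using vu' True by (meson rtrancl_into_rtrancl)
      next
        case False hence "b \<in> V" using b by simp
        thus ?thesis using con aV mono by blast
      qed
    qed
  qed simp
  moreover have "\<not> graph_has_cycle (insert v V) E"
  proof
    assume "graph_has_cycle (insert v V) E"
    then obtain cs where cs: "length cs \<ge> 3" "distinct cs" "set cs \<subseteq> insert v V"
      "\<forall>i<length cs. (cs ! i, cs ! ((i + 1) mod length cs)) \<in> E" by (auto simp: graph_has_cycle_def)
    show False
    proof (cases "v \<in> set cs")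
      case False
      hence "graph_has_cycle V E" using cs unfolding graph_has_cycle_def by blast
      thus False using tr by (simp add: graph_tree_def)
    next
      case True
      then obtain i where i: "i < length cs" "cs ! i = v" by (meson in_set_conv_nth)
      obtain p where p: "p < length cs" "(p + 1) mod length cs = i" "p \<noteq> (i + 1) mod length cs"
        using idx_pred[OF i(1) cs(1)] by blast
      have n0: "length cs > 0" using cs(1) by linarith
      have e1: "(v, cs ! ((i + 1) mod length cs)) \<in> E" using cs(4) i by auto
      have e2: "(v, cs ! p) \<in> E" using cs(4) p i symE by metis
      have ne: "(i + 1) mod length cs \<noteq> i"
      proof (cases "i + 1 < length cs")
        case True thus ?thesis by simp
      next
        case False hence "i + 1 = length cs" using i(1) by linarith
        thus ?thesis using cs(1) by simp
      qed
      have d1: "cs ! ((i + 1) mod length cs) \<noteq> v"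
        using ne nth_eq_iff_index_eq[OF cs(2), of "(i + 1) mod length cs" i] i n0 by simp
      have "p \<noteq> i" using ne p(2) by auto
      hence d2: "cs ! p \<noteq> v" using nth_eq_iff_index_eq[OF cs(2), of p i] i p(1) by simp
      have m1: "cs ! ((i + 1) mod length cs) \<in> V" using d1 cs(3) n0 by (meson insertE nth_mem mod_less_divisor subsetD)
      have m2: "cs ! p \<in> V" using d2 cs(3) p by (meson insertE nth_mem subsetD)
      have "cs ! ((i + 1) mod length cs) = cs ! p" using uniq[OF m1 e1] uniq[OF m2 e2] by simp
      hence "(i + 1) mod length cs = p" using nth_eq_iff_index_eq[OF cs(2)] p(1) n0 by simp
      thus False using p(3) by simp
    qed
  qed
  ultimately show ?thesis by (simp add: graph_tree_def)
qed


definition bgV :: "(nat \<Rightarrow> nat \<Rightarrow> bool) \<Rightarrow> (nat + nat) set" where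
  "bgV P = Inl ` {a. \<exists>b. P a b} \<union> Inr ` {b. \<exists>a. P a b}"
definition bgE :: "(nat \<Rightarrow> nat \<Rightarrow> bool) \<Rightarrow> ((nat + nat) \<times> (nat + nat)) set" where
  "bgE P = {(Inl a, Inr b) | a b. P a b} \<union> {(Inr b, Inl a) | a b. P a b}"

lemma bgE_sym: "(a, b) \<in> bgE P \<Longrightarrow> (b, a) \<in> bgE P" by (auto simp: bgE_def)

lemma bgE_simps[simp]:
  "(Inl a, Inr b) \<in> bgE P \<longleftrightarrow> P a b" "(Inr b, Inl a) \<in> bgE P \<longleftrightarrow> P a b"
  "(Inl a, Inl a') \<notin> bgE P" "(Inr b, Inr b') \<notin> bgE P"
  by (auto simp: bgE_def)

lemma ext_graph_bg:
  assumes "w \<in> lang Z"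
  shows "dendric_word Z w \<longleftrightarrow> graph_tree (bgV (\<lambda>a b. [a] @ w @ [b] \<in> lang Z)) (bgE (\<lambda>a b. [a] @ w @ [b] \<in> lang Z))"
proof -
  have "ext_vertices Z w = bgV (\<lambda>a b. [a] @ w @ [b] \<in> lang Z)"
    unfolding ext_vertices_def bgV_def left_ext_alt[OF assms] right_ext_alt[OF assms] ..
  moreover have "ext_edges Z w = bgE (\<lambda>a b. [a] @ w @ [b] \<in> lang Z)"
    unfolding ext_edges_def bgE_def ..
  ultimately show ?thesis by (simp add: dendric_word_def)
qed

lemma star_left:
  assumes fin: "finite {b. \<exists>a. P a b}" and one: "{a. \<exists>b. P a b} = {a0}"
  shows "graph_tree (bgV P) (bgE P)"
proof -
  have "finite R \<Longrightarrow> R \<subseteq> {b. \<exists>a. P a b} \<Longrightarrow> graph_tree (insert (Inl a0) (Inr ` R)) (bgE P)" for R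
  proof (induction R rule: finite_induct)
    case empty thus ?case using tree_single by simp
  next
    case (insert b R)
    have Pb: "P a0 b" using insert one by auto
    have "graph_tree (insert (Inr b) (insert (Inl a0) (Inr ` R))) (bgE P)"
      by (rule leaf_add[where u = "Inl a0"]) (use insert Pb one in \<open>auto intro: bgE_sym\<close>)
    thus ?case by (simp add: insert_commute)
  qed
  from this[OF fin subset_refl] show ?thesis unfolding bgV_def one by simp
qed

lemma star_right:
  assumes fin: "finite {a. \<exists>b. P a b}" and one: "{b. \<exists>a. P a b} = {b0}"
  shows "graph_tree (bgV P) (bgE P)"
proof -
  have "finite R \<Longrightarrow> R \<subseteq> {a. \<exists>b. P a b} \<Longrightarrow> graph_tree (insert (Inr b0) (Inl ` R)) (bgE P)" for R
  proof (induction R rule: finite_induct)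
    case empty thus ?case using tree_single by simp
  next
    case (insert a R)
    have Pa: "P a b0" using insert one by auto
    have "graph_tree (insert (Inl a) (insert (Inr b0) (Inl ` R))) (bgE P)"
      by (rule leaf_add[where u = "Inr b0"]) (use insert Pa one in \<open>auto intro: bgE_sym\<close>)
    thus ?case by (simp add: insert_commute)
  qed
  from this[OF fin subset_refl] show ?thesis unfolding bgV_def one by (simp add: Un_commute)
qed


lemma cum_0[simp]: "cum \<sigma> x 0 = 0" by (simp add: cum_def)

lemma cum_succ: "cum \<sigma> x (i + 1) = cum \<sigma> x i + int (length (\<sigma> (x i)))"
proof -
  let ?f = "\<lambda>j. int (length (\<sigma> (x j)))"
  consider "i \<ge> 0" | "i = -1" | "i < -1" by linarith
  thus ?thesis
  proof cases
    case 1
    have "{0..<i+1} = insert i {0..<i}" using 1 by auto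
    hence "sum ?f {0..<i+1} = ?f i + sum ?f {0..<i}" by simp
    thus ?thesis using 1 by (simp add: cum_def)
  next
    case 2
    have "{-1..<0::int} = {-1}" by auto
    thus ?thesis using 2 by (simp add: cum_def)
  next
    case 3
    have "{i..<0} = insert i {i+1..<0}" using 3 by auto
    hence "sum ?f {i..<0} = ?f i + sum ?f {i+1..<0}" by simp
    thus ?thesis using 3 by (simp add: cum_def)
  qed
qed

locale blk =
  fixes \<sigma> :: morph and x :: "int \<Rightarrow> nat"
  assumes ne: "\<And>i. \<sigma> (x i) \<noteq> []"
begin

abbreviation "C \<equiv> cum \<sigma> x"
abbreviation "lnb i \<equiv> int (length (\<sigma> (x i)))"

lemma lnb_pos: "lnb i \<ge> 1" using ne[of i] by (cases "\<sigma> (x i)") auto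

lemma cum_grow: "C i + int n \<le> C (i + int n)"
proof (induction n)
  case (Suc n)
  have "i + int (Suc n) = (i + int n) + 1" by simp
  hence "C (i + int (Suc n)) = C (i + int n) + lnb (i + int n)"
    using cum_succ[of \<sigma> x "i + int n"] by (simp only:)
  thus ?case using Suc lnb_pos[of "i + int n"] by simp
qed simp

lemma cum_less: "i < j \<Longrightarrow> C i < C j"
proof -
  assume "i < j"
  have e: "i + 1 + int (nat (j - i - 1)) = j" using \<open>i < j\<close> by simp
  have "C (i + 1) + int (nat (j - i - 1)) \<le> C j" using cum_grow[of "i + 1" "nat (j - i - 1)"] unfolding e .
  moreover have "C (i + 1) > C i" using cum_succ[of \<sigma> x i] lnb_pos[of i] by linarith
  ultimately show ?thesis by linarith
qed

lemma cum_le_iff[simp]: "C i \<le> C j \<longleftrightarrow> i \<le> j"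
  using cum_less[of i j] cum_less[of j i] by (cases i j rule: linorder_cases) auto
lemma cum_less_iff[simp]: "C i < C j \<longleftrightarrow> i < j"
  using cum_less[of i j] cum_less[of j i] by (cases i j rule: linorder_cases) auto
lemma cum_eq_iff[simp]: "C i = C j \<longleftrightarrow> i = j"
proof
  assume h: "C i = C j"
  show "i = j"
  proof (rule ccontr)
    assume "i \<noteq> j" hence "i < j \<or> j < i" by arith
    thus False using cum_less[of i j] cum_less[of j i] h by auto
  qed
qed simp

lemma cum_diff: "i \<le> j \<Longrightarrow> C j - C i \<ge> j - i"
  using cum_grow[of i "nat (j - i)"] by simp

lemma block_ex: "\<exists>i. C i \<le> n \<and> n < C (i + 1)"
proof -
  define lo where "lo = min n 0"
  have clo: "C lo \<le> n"
  proof (cases "n \<ge> 0")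
    case True thus ?thesis by (simp add: lo_def)
  next
    case False
    have "C lo + (0 - lo) \<le> C 0" using cum_diff[of lo 0] by (simp add: lo_def)
    thus ?thesis using False by (simp add: lo_def)
  qed
  define P where "P t \<longleftrightarrow> n < C (lo + int (Suc t))" for t :: nat
  have "C lo + int (Suc (nat (n - C lo))) \<le> C (lo + int (Suc (nat (n - C lo))))" by (rule cum_grow)
  hence "P (nat (n - C lo))" using clo unfolding P_def by linarith
  hence Pl: "P (LEAST t. P t)" by (rule LeastI)
  have "C (lo + int (LEAST t. P t)) \<le> n"
  proof (cases "(LEAST t. P t)")
    case 0 thus ?thesis using clo by simp
  next
    case (Suc s)
    hence "\<not> P s" using not_less_Least[of s P] by simp
    thus ?thesis using Suc by (simp add: P_def)
  qed
  moreover have "lo + int (Suc (LEAST t. P t)) = lo + int (LEAST t. P t) + 1" by simp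
  ultimately show ?thesis using Pl unfolding P_def by metis
qed

lemma block_uniq: "C i \<le> n \<Longrightarrow> n < C (i + 1) \<Longrightarrow> C j \<le> n \<Longrightarrow> n < C (j + 1) \<Longrightarrow> i = j"
  by (metis cum_le_iff cum_less_iff le_less_trans linorder_neqE zless_imp_add1_zle not_less)

lemma mor_seq_blk: "C i \<le> n \<Longrightarrow> n < C (i + 1) \<Longrightarrow> mor_seq \<sigma> x n = \<sigma> (x i) ! nat (n - C i)"
proof -
  assume a: "C i \<le> n" "n < C (i + 1)"
  have "(THE i. C i \<le> n \<and> n < C (i + 1)) = i"
    by (rule the_equality) (use a block_uniq in auto)
  thus ?thesis by (simp add: mor_seq_def Let_def)
qed

lemma mor_seq_at: "r < length (\<sigma> (x i)) \<Longrightarrow> mor_seq \<sigma> x (C i + int r) = \<sigma> (x i) ! r"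
  using mor_seq_blk[of i "C i + int r"] cum_succ[of \<sigma> x i] by simp

lemma win_block: "win (mor_seq \<sigma> x) (C i) (length (\<sigma> (x i))) = \<sigma> (x i)"
  by (rule nth_equalityI) (simp_all add: mor_seq_at)

lemma win_block_drop: "d \<le> length (\<sigma> (x i)) \<Longrightarrow>
   win (mor_seq \<sigma> x) (C i + int d) (length (\<sigma> (x i)) - d) = drop d (\<sigma> (x i))"
  by (rule nth_equalityI) (simp_all add: mor_seq_at[symmetric] add.assoc)

lemma win_block_take: "q \<le> length (\<sigma> (x i)) \<Longrightarrow>
   win (mor_seq \<sigma> x) (C i) q = take q (\<sigma> (x i))"
  by (rule nth_equalityI) (simp_all add: mor_seq_at)

lemma win_blocks: "win (mor_seq \<sigma> x) (C i) (nat (C (i + int n) - C i)) = mor_word \<sigma> (win x i n)"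
proof (induction n)
  case 0 thus ?case by (simp add: mor_word_def win_def)
next
  case (Suc n)
  have "i + int (Suc n) = (i + int n) + 1" by simp
  hence e: "C (i + int (Suc n)) = C (i + int n) + lnb (i + int n)"
    using cum_succ[of \<sigma> x "i + int n"] by (simp only:)
  have ge: "C (i + int n) \<ge> C i" by simp
  have "nat (C (i + int (Suc n)) - C i) = nat ((C (i + int n) - C i) + int (length (\<sigma> (x (i + int n)))))"
    using e by (simp add: algebra_simps)
  also have "\<dots> = nat (C (i + int n) - C i) + length (\<sigma> (x (i + int n)))"
    using ge by (simp add: nat_add_distrib)
  finally have "nat (C (i + int (Suc n)) - C i) = nat (C (i + int n) - C i) + length (\<sigma> (x (i + int n)))" .
  hence "win (mor_seq \<sigma> x) (C i) (nat (C (i + int (Suc n)) - C i)) =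
     mor_word \<sigma> (win x i n) @ \<sigma> (x (i + int n))"
    using ge by (simp add: win_append Suc win_block)
  thus ?case by (simp add: win_Suc2 mor_word_def)
qed

end


lemma S3_shape: "\<sigma> \<in> S3 \<Longrightarrow> c \<in> A3 \<Longrightarrow> \<exists>t. \<sigma> c = 1 # t \<and> set t \<subseteq> {2,3}"
  unfolding S3_def A3_def
  by (auto simp: mor_alpha_def mor_beta_def mor_gamma_def mor_eta_def mor_delta_def mor_zeta_def)

lemma shift_pow: "(shift ^^ k) f n = f (n + int k)"
  by (induction k arbitrary: n) (auto simp: shift_def ac_simps)

locale sctx =
  fixes X :: "(int \<Rightarrow> nat) set" and \<sigma> :: morph
  assumes sh: "shift_space A3 X" and sig: "\<sigma> \<in> S3"
begin

abbreviation "Y \<equiv> image_shift \<sigma> X"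

lemma X_A3: "x \<in> X \<Longrightarrow> x n \<in> A3" using sh by (auto simp: shift_space_def)

lemma shape: "c \<in> A3 \<Longrightarrow> \<exists>t. \<sigma> c = 1 # t \<and> set t \<subseteq> {2,3}" using S3_shape sig by blast

lemma sig_ne: "c \<in> A3 \<Longrightarrow> \<sigma> c \<noteq> []" using shape by fastforce

lemma blkX: "x \<in> X \<Longrightarrow> blk \<sigma> x" by unfold_locales (simp add: sig_ne X_A3)

lemma sig_nth_one: "c \<in> A3 \<Longrightarrow> r < length (\<sigma> c) \<Longrightarrow> \<sigma> c ! r = 1 \<longleftrightarrow> r = 0"
proof -
  assume c: "c \<in> A3" and r: "r < length (\<sigma> c)"
  obtain t where t: "\<sigma> c = 1 # t" "set t \<subseteq> {2,3}" using shape[OF c] by blast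
  show ?thesis
  proof (cases r)
    case (Suc q)
    hence "t ! q \<in> set t" using r t by simp
    thus ?thesis using t Suc by auto
  qed (simp add: t)
qed

lemma sig_A3: "c \<in> A3 \<Longrightarrow> set (\<sigma> c) \<subseteq> A3"
  using shape by (fastforce simp: A3_def)

lemma ms_one: assumes "x \<in> X" shows "mor_seq \<sigma> x n = 1 \<longleftrightarrow> (\<exists>i. n = cum \<sigma> x i)"
proof -
  interpret blk \<sigma> x by (rule blkX[OF assms])
  obtain i where i: "C i \<le> n" "n < C (i + 1)" using block_ex by blast
  have r: "nat (n - C i) < length (\<sigma> (x i))" using i cum_succ[of \<sigma> x i] by simp
  have v: "mor_seq \<sigma> x n = \<sigma> (x i) ! nat (n - C i)" using mor_seq_blk[OF i] .
  show ?thesis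
  proof
    assume "mor_seq \<sigma> x n = 1"
    hence "nat (n - C i) = 0" using sig_nth_one[OF X_A3[OF assms] r] v by simp
    thus "\<exists>i. n = C i" using i by auto
  next
    assume "\<exists>j. n = C j"
    then obtain j where j: "n = C j" by blast
    have "j = i" using block_uniq[of j n i] i j cum_succ[of \<sigma> x j] lnb_pos[of j] by simp
    thus "mor_seq \<sigma> x n = 1" using v j sig_nth_one[OF X_A3[OF assms], of 0] sig_ne[OF X_A3[OF assms]] by simp
  qed
qed

lemma ms_A3: assumes "x \<in> X" shows "mor_seq \<sigma> x n \<in> A3"
proof -
  interpret blk \<sigma> x by (rule blkX[OF assms])
  obtain i where i: "C i \<le> n" "n < C (i + 1)" using block_ex by blast
  have r: "nat (n - C i) < length (\<sigma> (x i))" using i cum_succ[of \<sigma> x i] by simp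
  show ?thesis using mor_seq_blk[OF i] nth_mem[OF r] sig_A3[OF X_A3[OF assms]] by auto
qed

lemma lang_Y: "u \<in> lang Y \<longleftrightarrow> (\<exists>x\<in>X. \<exists>m. u = win (mor_seq \<sigma> x) m (length u))"
proof
  assume "u \<in> lang Y"
  then obtain y i where y: "y \<in> Y" "u = win y i (length u)" by (auto simp: lang_win)
  then obtain x k where "x \<in> X" "y = (shift ^^ k) (mor_seq \<sigma> x)" by (auto simp: image_shift_def)
  hence "u = win (mor_seq \<sigma> x) (i + int k) (length u)" using y(2) by (simp add: win_def shift_pow ac_simps)
  thus "\<exists>x\<in>X. \<exists>m. u = win (mor_seq \<sigma> x) m (length u)" using \<open>x \<in> X\<close> by blast
next
  assume "\<exists>x\<in>X. \<exists>m. u = win (mor_seq \<sigma> x) m (length u)"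
  then obtain x m where x: "x \<in> X" "u = win (mor_seq \<sigma> x) m (length u)" by blast
  have "mor_seq \<sigma> x \<in> Y" unfolding image_shift_def
    using x(1) sig_ne[OF X_A3[OF x(1)], of 0]
    by (intro CollectI exI[of _ x] exI[of _ 0]) auto
  thus "u \<in> lang Y" using x(2) by (auto simp: lang_win)
qed

lemma Y_letters: "a # w \<in> lang Y \<Longrightarrow> a \<in> A3"
proof -
  assume "a # w \<in> lang Y"
  then obtain x m where x: "x \<in> X" "a # w = win (mor_seq \<sigma> x) m (length (a # w))" using lang_Y by blast
  hence "a = mor_seq \<sigma> x m" using x(2) by (simp add: win_Suc)
  thus ?thesis using ms_A3[OF x(1)] by simp
qed

lemma Y_letters2: "w @ [b] \<in> lang Y \<Longrightarrow> b \<in> A3"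
proof -
  assume "w @ [b] \<in> lang Y"
  hence "[b] \<in> lang Y" using lang_append by blast
  thus ?thesis using Y_letters[of b "[]"] by simp
qed

lemma X_letters: "a # w \<in> lang X \<Longrightarrow> a \<in> A3"
proof -
  assume "a # w \<in> lang X"
  then obtain x m where x: "x \<in> X" "a # w = win x m (length (a # w))" by (auto simp: lang_win)
  hence "a = x m" using x(2) by (simp add: win_Suc)
  thus ?thesis using X_A3[OF x(1)] by simp
qed

end


lemma take_win: "k \<le> L \<Longrightarrow> take k (win f m L) = win f m k"
  by (rule nth_equalityI) auto
lemma drop_win: "k \<le> L \<Longrightarrow> drop k (win f m L) = win f (m + int k) (L - k)"
  by (rule nth_equalityI) (auto simp: ac_simps)

context sctx begin

lemma ext_img:
  assumes uY: "u \<in> lang Y" and one: "1 \<in> set u"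
  shows "\<exists>v\<in>lang X. ext_image X \<sigma> v u"
proof -
  obtain x m where xX: "x \<in> X" and uw: "u = win (mor_seq \<sigma> x) m (length u)" using uY lang_Y by blast
  interpret blk \<sigma> x by (rule blkX[OF xX])
  define f where "f = mor_seq \<sigma> x"
  define L where "L = length u"
  have uw': "u = win f m L" using uw by (simp add: f_def L_def)
  obtain s r where sr: "u = s @ 1 # r" "1 \<notin> set s" using split_list_first[OF one] by blast
  obtain mid p' where mp: "1 # r = mid @ 1 # p'" "1 \<notin> set p'" using split_list_last[of 1 "1 # r"] by auto
  define F where "F = length s"
  define G where "G = length s + length mid"
  have ue: "u = s @ mid @ 1 # p'" using sr mp by simp
  have LFG: "L = G + 1 + length p'" using ue by (simp add: L_def G_def)
  have uF: "u ! F = 1" using sr(1) by (simp add: F_def nth_append)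
  have uG: "u ! G = 1" using ue by (simp add: G_def nth_append)
  have uj: "u ! j = f (m + int j)" if "j < L" for j using uw' that by simp
  obtain i0 where i0: "m + int F = C i0" using uF uj[of F] ms_one[OF xX] LFG unfolding f_def G_def F_def by auto
  obtain i1 where i1: "m + int G = C i1" using uG uj[of G] ms_one[OF xX] LFG unfolding f_def by auto
  have "C i0 \<le> C i1" unfolding i0[symmetric] i1[symmetric] by (simp add: F_def G_def)
  hence "i0 \<le> i1" by simp
  define n where "n = nat (i1 - i0)"
  have i1n: "i1 = i0 + int n" using \<open>i0 \<le> i1\<close> by (simp add: n_def)
  have A: "C (i0 - 1) < m"
  proof (rule ccontr)
    assume "\<not> C (i0 - 1) < m"
    define j where "j = nat (C (i0 - 1) - m)"
    have lt: "C (i0 - 1) < C i0" by (rule cum_less) simp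
    have "C (i0 - 1) - m < int F" using lt i0 by linarith
    hence jF: "j < F" using \<open>\<not> C (i0 - 1) < m\<close> unfolding j_def by (simp add: nat_less_iff)
    have "u ! j = f (C (i0 - 1))" using uj[of j] jF LFG \<open>\<not> C (i0 - 1) < m\<close> by (simp add: j_def G_def F_def)
    hence "u ! j = 1" using ms_one[OF xX] by (simp add: f_def)
    moreover have "u ! j = s ! j" using jF ue by (simp add: nth_append F_def)
    moreover have "s ! j \<in> set s" using jF by (simp add: F_def)
    ultimately show False using sr(2) by simp
  qed
  have B: "m + int L \<le> C (i1 + 1)"
  proof (rule ccontr)
    assume nB: "\<not> m + int L \<le> C (i1 + 1)"
    define j where "j = nat (C (i1 + 1) - m)"
    have lt: "C i1 < C (i1 + 1)" by (rule cum_less) simp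
    have jj: "int G < C (i1 + 1) - m" "C (i1 + 1) - m < int L" using lt i1 nB by linarith+
    hence jG: "G < j" "j < L" unfolding j_def by linarith+
    have "u ! j = f (C (i1 + 1))" using uj[of j] jG jj by (simp add: j_def)
    hence u1: "u ! j = 1" using ms_one[OF xX] by (simp add: f_def)
    have ue2: "u = (s @ mid) @ (1 # p')" using ue by simp
    have "u ! j = (1 # p') ! (j - length (s @ mid))" unfolding ue2
      by (rule nth_append_right) (use jG in \<open>simp add: G_def\<close>)
    hence "u ! j = (1 # p') ! (j - G)" by (simp add: G_def)
    also have "\<dots> = p' ! (j - G - 1)" using jG by (simp add: nth_Cons')
    finally have eq: "u ! j = p' ! (j - G - 1)" .
    have "j - G - 1 < length p'" using jG LFG by simp
    hence mem: "p' ! (j - G - 1) \<in> set p'" by (rule nth_mem)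
    have pe: "p' ! (j - G - 1) = 1" using u1 eq by simp
    show False using mp(2) mem unfolding pe by (rule notE)
  qed
  let ?a = "x (i0 - 1)" and ?b = "x i1" and ?v = "win x i0 n"
  have cs0: "C i0 = C (i0 - 1) + lnb (i0 - 1)" using cum_succ[of \<sigma> x "i0 - 1"] by simp
  have cs1: "C (i1 + 1) = C i1 + lnb i1" using cum_succ[of \<sigma> x i1] by simp
  define d where "d = nat (m - C (i0 - 1))"
  have d1: "d \<ge> 1" "d \<le> length (\<sigma> ?a)" using A i0 cs0 by (simp_all add: d_def)
  have Fd: "F = length (\<sigma> ?a) - d" using A i0 cs0 by (simp add: d_def)
  have s_eq: "s = drop d (\<sigma> ?a)"
  proof -
    have "s = take F u" using ue by (simp add: F_def)
    also have "\<dots> = win f m F" using uw' take_win LFG by (simp add: G_def F_def)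
    also have "m = C (i0 - 1) + int d" using A by (simp add: d_def)
    finally show ?thesis using win_block_drop[OF d1(2)] Fd by (simp add: f_def)
  qed
  have mid_eq: "mid = mor_word \<sigma> ?v"
  proof -
    have "mid = take (G - F) (drop F u)" using ue by (simp add: F_def G_def)
    also have "\<dots> = win f (m + int F) (G - F)" using uw' take_win drop_win LFG by (simp add: G_def F_def)
    also have "G - F = nat (C (i0 + int n) - C i0)" using i0 i1 i1n by (simp add: G_def F_def)
    finally show ?thesis using win_blocks[of i0 n] i0 by (simp add: f_def)
  qed
  define q where "q = L - G"
  have q: "q \<le> length (\<sigma> ?b)" "q \<ge> 1" using B i1 cs1 LFG by (simp_all add: q_def)
  have p_eq: "1 # p' = take q (\<sigma> ?b)"
  proof -
    have "1 # p' = drop G u" using ue by (simp add: G_def)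
    also have "\<dots> = win f (m + int G) q" using uw' drop_win LFG by (simp add: q_def)
    finally show ?thesis using win_block_take[OF q(1)] i1 by (simp add: f_def)
  qed
  have avb: "[?a] @ ?v @ [?b] \<in> lang X"
  proof -
    have "win x (i0 - 1) (Suc n + 1) = [?a] @ ?v @ [?b]"
      using i1n by (subst win_append, subst win_Suc) (simp, simp add: win_def)
    moreover have "length ([?a] @ ?v @ [?b]) = Suc n + 1" by simp
    ultimately have "[?a] @ ?v @ [?b] = win x (i0 - 1) (length ([?a] @ ?v @ [?b]))" by simp
    thus ?thesis using xX unfolding lang_win by blast
  qed
  have vX: "?v \<in> lang X" using avb lang_append[of "[?a]" "?v @ [?b]"] lang_append[of ?v "[?b]"] by simp
  have "strict_suffix s (\<sigma> ?a)"
    using s_eq d1 unfolding strict_suffix_def by (auto simp: suffix_drop dest: arg_cong[of _ _ length])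
  moreover have "prefix (1 # p') (\<sigma> ?b)" using p_eq by (metis take_is_prefix)
  moreover have "u = s @ mor_word \<sigma> ?v @ (1 # p')" using ue mid_eq by simp
  ultimately have "ext_image X \<sigma> ?v u" unfolding ext_image_def using uY avb by blast
  thus ?thesis using vX by blast
qed

end

lemma sublist_win_sub: "d + L \<le> N \<Longrightarrow> sublist (win f (a + int d) L) (win f a N)"
proof -
  assume h: "d + L \<le> N"
  have "win f a N = win f a d @ win f (a + int d) L @ win f (a + int d + int L) (N - d - L)"
    using win_append[of f a d "L + (N - d - L)"] win_append[of f "a + int d" L "N - d - L"] h
    by (simp add: add.assoc)
  thus ?thesis unfolding sublist_def by blast
qed

context sctx begin

lemma lt_char:
  assumes noint: "\<And>j. 0 < j \<Longrightarrow> j + 1 < length w \<Longrightarrow> w ! j \<noteq> 1"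
  shows "w \<in> lang Y \<longleftrightarrow> (\<exists>c\<in>A3. sublist w (\<sigma> c @ [1]))"
proof
  assume "w \<in> lang Y"
  then obtain x m where xX: "x \<in> X" and ww: "w = win (mor_seq \<sigma> x) m (length w)" using lang_Y by blast
  interpret blk \<sigma> x by (rule blkX[OF xX])
  define f where "f = mor_seq \<sigma> x"
  define L where "L = length w"
  obtain i where i: "C i \<le> m" "m < C (i + 1)" using block_ex by blast
  have cs: "C (i + 1) = C i + lnb i" using cum_succ[of \<sigma> x i] by simp
  have bound: "m + int L \<le> C (i + 1) + 1"
  proof (rule ccontr)
    assume nb: "\<not> ?thesis"
    define j where "j = nat (C (i + 1) - m)"
    have jj: "0 < j" "j + 1 < L" using i nb by (simp_all add: j_def)
    have "win f m L ! j = f (m + int j)" using jj by simp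
    moreover have "m + int j = C (i + 1)" using i by (simp add: j_def)
    moreover have "w = win f m L" using ww by (simp add: f_def L_def)
    ultimately have "w ! j = f (C (i + 1))" by simp
    hence "w ! j = 1" using ms_one[OF xX] by (simp add: f_def)
    thus False using noint[of j] jj by (simp add: L_def)
  qed
  have blk1: "win f (C i) (length (\<sigma> (x i)) + 1) = \<sigma> (x i) @ [1]"
  proof -
    have "win f (C i) (length (\<sigma> (x i)) + 1) = \<sigma> (x i) @ [f (C (i + 1))]"
      using win_Suc2[of f "C i" "length (\<sigma> (x i))"] cs win_block by (simp add: f_def)
    moreover have "f (C (i + 1)) = 1" using ms_one[OF xX] by (auto simp: f_def)
    ultimately show ?thesis by simp
  qed
  define d where "d = nat (m - C i)"
  have md: "m = C i + int d" using i by (simp add: d_def)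
  have "d + L \<le> length (\<sigma> (x i)) + 1" using bound md cs by simp
  hence "sublist (win f (C i + int d) L) (win f (C i) (length (\<sigma> (x i)) + 1))" by (rule sublist_win_sub)
  hence "sublist w (\<sigma> (x i) @ [1])" using ww blk1 md by (simp add: f_def L_def)
  thus "\<exists>c\<in>A3. sublist w (\<sigma> c @ [1])" using X_A3[OF xX] by blast
next
  assume "\<exists>c\<in>A3. sublist w (\<sigma> c @ [1])"
  then obtain c where c: "c \<in> A3" "sublist w (\<sigma> c @ [1])" by blast
  obtain x n where xX: "x \<in> X" and xn: "x n = c" using sh c(1) unfolding shift_space_def by blast
  interpret blk \<sigma> x by (rule blkX[OF xX])
  define f where "f = mor_seq \<sigma> x"
  have cs: "C (n + 1) = C n + lnb n" using cum_succ[of \<sigma> x n] by simp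
  have "win f (C n) (length (\<sigma> (x n)) + 1) = \<sigma> (x n) @ [f (C (n + 1))]"
    using win_Suc2[of f "C n" "length (\<sigma> (x n))"] cs win_block by (simp add: f_def)
  moreover have "f (C (n + 1)) = 1" using ms_one[OF xX] by (auto simp: f_def)
  ultimately have "sublist w (win f (C n) (length (\<sigma> (x n)) + 1))" using c xn by simp
  then obtain i where "w = win f i (length w)" using sublist_win by blast
  thus "w \<in> lang Y" using lang_Y xX by (auto simp: f_def)
qed

end

lemma PR: "(y::nat) \<noteq> 3 \<Longrightarrow> prefix (replicate j 3 @ [b]) (replicate m 3 @ [y]) \<longleftrightarrow> (j = m \<and> b = y) \<or> (j < m \<and> b = 3)"
proof (induction j arbitrary: m)
  case 0 thus ?case by (cases m) auto
next
  case (Suc j) thus ?case by (cases m) auto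
qed

lemma SR: "(y::nat) \<noteq> 3 \<Longrightarrow> sublist (a # replicate j 3 @ [b]) (replicate m 3 @ [y]) \<longleftrightarrow>
   a = 3 \<and> ((j + 1 \<le> m \<and> b = y) \<or> (j + 1 < m \<and> b = 3))"
proof (induction m)
  case 0 thus ?case by (auto simp: sublist_Cons_right)
next
  case (Suc m)
  have "sublist (a # replicate j 3 @ [b]) (replicate (Suc m) 3 @ [y]) \<longleftrightarrow>
        (a = 3 \<and> prefix (replicate j 3 @ [b]) (replicate m 3 @ [y])) \<or>
        sublist (a # replicate j 3 @ [b]) (replicate m 3 @ [y])"
    by (simp add: sublist_Cons_right)
  also have "\<dots> \<longleftrightarrow> a = 3 \<and> ((j + 1 \<le> Suc m \<and> b = y) \<or> (j + 1 < Suc m \<and> b = 3))"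
    using Suc PR[OF Suc.prems, of j b m] by auto
  finally show ?case .
qed

lemma repsub: "(y::nat) \<noteq> 3 \<Longrightarrow> sublist (a # replicate j 3 @ [b]) (x # replicate m 3 @ [y]) \<longleftrightarrow>
   (a = x \<and> b = y \<and> j = m) \<or> (a = x \<and> b = 3 \<and> j < m) \<or>
   (a = 3 \<and> b = y \<and> j + 1 \<le> m) \<or> (a = 3 \<and> b = 3 \<and> j + 1 < m)"
proof -
  assume y: "y \<noteq> 3"
  have "sublist (a # replicate j 3 @ [b]) (x # replicate m 3 @ [y]) \<longleftrightarrow>
     (a = x \<and> prefix (replicate j 3 @ [b]) (replicate m 3 @ [y])) \<or>
     sublist (a # replicate j 3 @ [b]) (replicate m 3 @ [y])"
    by (simp add: sublist_Cons_right)
  thus ?thesis unfolding PR[OF y, of j b m] SR[OF y, of a j b m] by blast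
qed

lemma repsub0: "(y::nat) \<noteq> 3 \<Longrightarrow> sublist [a, b] (x # replicate m 3 @ [y]) \<longleftrightarrow>
   (a = x \<and> b = y \<and> m = 0) \<or> (a = x \<and> b = 3 \<and> 0 < m) \<or>
   (a = 3 \<and> b = y \<and> 1 \<le> m) \<or> (a = 3 \<and> b = 3 \<and> 1 < m)"
  using repsub[of y a 0 b x m] by simp

lemma sub_strip:
  assumes "sublist w (x # t @ [y])" "x \<notin> set w" "y \<notin> set w"
  shows "sublist w t"
proof (cases w)
  case Nil thus ?thesis by simp
next
  case (Cons c w')
  have "\<not> prefix w (x # t @ [y])" using assms(2) Cons by auto
  hence "sublist w (t @ [y])" using assms(1) by (simp add: sublist_Cons_right)
  moreover have "\<not> suffix w (t @ [y])"
  proof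
    assume "suffix w (t @ [y])"
    then obtain zs where "w = zs @ [y]" using Cons by (auto simp: suffix_snoc)
    hence "y \<in> set w" by simp
    thus False using assms(3) by contradiction
  qed
  ultimately show ?thesis unfolding sublist_snoc by blast
qed

lemma sub_inner: "sublist (a # w @ [b]) t \<Longrightarrow> sublist w t"
proof -
  assume "sublist (a # w @ [b]) t"
  then obtain ps ss where "t = ps @ (a # w @ [b]) @ ss" by (auto simp: sublist_def)
  hence "t = (ps @ [a]) @ w @ ([b] @ ss)" by simp
  thus ?thesis unfolding sublist_def by blast
qed


definition Qs :: "morph \<Rightarrow> nat list \<Rightarrow> nat \<Rightarrow> nat \<Rightarrow> bool" where
  "Qs \<sigma> w a b \<longleftrightarrow> (\<exists>c\<in>A3. sublist (a # w @ [b]) (\<sigma> c @ [1]))"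

definition good :: "morph \<Rightarrow> bool" where
  "good \<sigma> \<longleftrightarrow> (\<forall>w. 1 \<notin> set w \<longrightarrow> 2 \<le> card {a. \<exists>b. Qs \<sigma> w a b} \<longrightarrow> 2 \<le> card {b. \<exists>a. Qs \<sigma> w a b}
      \<longrightarrow> graph_tree (bgV (Qs \<sigma> w)) (bgE (Qs \<sigma> w)))"

lemma leafI: "graph_tree V (bgE P) \<Longrightarrow> u \<in> V \<Longrightarrow> (v, u) \<in> bgE P \<Longrightarrow> (\<forall>w\<in>V. (v, w) \<in> bgE P \<longrightarrow> w = u)
  \<Longrightarrow> v \<notin> V \<Longrightarrow> graph_tree (insert v V) (bgE P)"
  by (rule leaf_add[OF bgE_sym]) blast+

lemma card_left1: "(\<And>a b. P a b \<Longrightarrow> a = a0) \<Longrightarrow> 2 \<le> card {a. \<exists>b. P a b} \<Longrightarrow> False"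
proof -
  assume h: "\<And>a b. P a b \<Longrightarrow> a = a0" "2 \<le> card {a. \<exists>b. P a b}"
  have "{a. \<exists>b. P a b} \<subseteq> {a0}" using h(1) by blast
  hence "card {a. \<exists>b. P a b} \<le> 1" using card_mono[of "{a0}"] by fastforce
  thus False using h(2) by simp
qed

lemma card_right1: "(\<And>a b. P a b \<Longrightarrow> b = b0) \<Longrightarrow> 2 \<le> card {b. \<exists>a. P a b} \<Longrightarrow> False"
proof -
  assume h: "\<And>a b. P a b \<Longrightarrow> b = b0" "2 \<le> card {b. \<exists>a. P a b}"
  have "{b. \<exists>a. P a b} \<subseteq> {b0}" using h(1) by blast
  hence "card {b. \<exists>a. P a b} \<le> 1" using card_mono[of "{b0}"] by fastforce
  thus False using h(2) by simp
qed

lemma card_ex: "2 \<le> card {a. \<exists>b. P a b} \<Longrightarrow> \<exists>a b. P a b"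
proof (rule ccontr)
  assume "2 \<le> card {a. \<exists>b. P a b}" "\<not> (\<exists>a b. P a b)"
  hence "{a. \<exists>b. P a b} = {}" by blast
  thus False using \<open>2 \<le> card _\<close> by simp
qed

lemma tail_sub: "\<sigma> c = 1 # t \<Longrightarrow> sublist (a # w @ [b]) (\<sigma> c @ [1]) \<Longrightarrow> 1 \<notin> set w \<Longrightarrow> sublist w t"
  using sub_strip[of w 1 t 1] sub_inner[of a w b "\<sigma> c @ [1]"] by simp

lemma Qs_tail: "Qs \<sigma> w a b \<Longrightarrow> 1 \<notin> set w \<Longrightarrow> (\<And>c. c \<in> A3 \<Longrightarrow> \<exists>t. \<sigma> c = 1 # t \<and> P t) \<Longrightarrow> \<exists>t. P t \<and> sublist w t"
proof -
  assume q: "Qs \<sigma> w a b" and one: "1 \<notin> set w" and T: "\<And>c. c \<in> A3 \<Longrightarrow> \<exists>t. \<sigma> c = 1 # t \<and> P t"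
  obtain c where c: "c \<in> A3" "sublist (a # w @ [b]) (\<sigma> c @ [1])" using q unfolding Qs_def by blast
  obtain t where t: "\<sigma> c = 1 # t" "P t" using T[OF c(1)] by blast
  show ?thesis using tail_sub[of \<sigma> c t a w b, OF t(1) c(2) one] t(2) by blast
qed


lemma good_alpha: "good mor_alpha"
  unfolding good_def
proof (intro allI impI)
  fix w :: "nat list" assume h: "1 \<notin> set w" "2 \<le> card {a. \<exists>b. Qs mor_alpha w a b}" "2 \<le> card {b. \<exists>a. Qs mor_alpha w a b}"
  show "graph_tree (bgV (Qs mor_alpha w)) (bgE (Qs mor_alpha w))"
  proof (cases "w = []")
    case True
    have P: "Qs mor_alpha w = (\<lambda>a b. (a, b) \<in> {(1,1),(1,2),(1,3),(2,1),(3,1)})"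
      using True by (intro ext) (auto simp: Qs_def A3_def mor_alpha_def sublist_code)
    have V: "bgV (Qs mor_alpha w) = {Inl 3, Inl 2, Inr 3, Inr 2, Inr 1, Inl 1}"
      unfolding P bgV_def by auto
    show ?thesis unfolding V unfolding P
      apply (rule leafI[where u="Inr 1"], rule leafI[where u="Inr 1"], rule leafI[where u="Inl 1"],
             rule leafI[where u="Inl 1"], rule leafI[where u="Inl 1"], rule tree_single)
      by auto
  next
    case False
    obtain a b where ab: "Qs mor_alpha w a b" using card_ex[OF h(2)] by blast
    have T: "\<exists>t. mor_alpha c = 1 # t \<and> t \<in> {[], [2], [3]}" if "c \<in> A3" for c
      using that by (auto simp: A3_def mor_alpha_def)
    obtain t where t: "t \<in> {[], [2], [3]}" "sublist w t"
      using Qs_tail[OF ab h(1) T] by blast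
    hence "w = [2] \<or> w = [3]" using False by (auto simp: sublist_Cons_right prefix_Cons)
    thus ?thesis
    proof
      assume "w = [2]"
      hence "Qs mor_alpha w a b \<Longrightarrow> a = 1" for a b by (auto simp: Qs_def A3_def mor_alpha_def sublist_code)
      thus ?thesis using card_left1[of "Qs mor_alpha w" 1] h(2) by blast
    next
      assume "w = [3]"
      hence "Qs mor_alpha w a b \<Longrightarrow> a = 1" for a b by (auto simp: Qs_def A3_def mor_alpha_def sublist_code)
      thus ?thesis using card_left1[of "Qs mor_alpha w" 1] h(2) by blast
    qed
  qed
qed


lemma good_beta: "good mor_beta"
  unfolding good_def
proof (intro allI impI)
  fix w :: "nat list" assume h: "1 \<notin> set w" "2 \<le> card {a. \<exists>b. Qs mor_beta w a b}" "2 \<le> card {b. \<exists>a. Qs mor_beta w a b}"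
  show "graph_tree (bgV (Qs mor_beta w)) (bgE (Qs mor_beta w))"
  proof (cases "w = []")
    case True
    have P: "Qs mor_beta w = (\<lambda>a b. (a, b) \<in> {(1,1),(1,2),(1,3),(3,2),(2,1)})"
      using True by (intro ext) (auto simp: Qs_def A3_def mor_beta_def sublist_code)
    have V: "bgV (Qs mor_beta w) = {Inl 2, Inl 3, Inr 3, Inr 2, Inr 1, Inl 1}"
      unfolding P bgV_def by auto
    show ?thesis unfolding V unfolding P
      apply (rule leafI[where u="Inr 1"], rule leafI[where u="Inr 2"], rule leafI[where u="Inl 1"], rule leafI[where u="Inl 1"], rule leafI[where u="Inl 1"], rule tree_single)
      by auto
  next
    case False
    obtain a b where ab: "Qs mor_beta w a b" using card_ex[OF h(2)] by blast
    have T: "\<exists>t. mor_beta c = 1 # t \<and> t \<in> {[], [2], [3,2]}" if "c \<in> A3" for c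
      using that by (auto simp: A3_def mor_beta_def)
    obtain t where t: "t \<in> {[], [2], [3,2]}" "sublist w t"
      using Qs_tail[OF ab h(1) T] by blast
    hence "w = [2] \<or> w = [3] \<or> w = [3,2]" using False by (auto simp: sublist_Cons_right prefix_Cons)
    thus ?thesis
    proof (elim disjE)
      assume "w = [2]"
      hence "Qs mor_beta w a b \<Longrightarrow> b = 1" for a b by (auto simp: Qs_def A3_def mor_beta_def sublist_code)
      thus ?thesis using card_right1[of "Qs mor_beta w" 1] h by blast
    next
      assume "w = [3]"
      hence "Qs mor_beta w a b \<Longrightarrow> a = 1" for a b by (auto simp: Qs_def A3_def mor_beta_def sublist_code)
      thus ?thesis using card_left1[of "Qs mor_beta w" 1] h by blast
    next
      assume "w = [3,2]"
      hence "Qs mor_beta w a b \<Longrightarrow> a = 1" for a b by (auto simp: Qs_def A3_def mor_beta_def sublist_code)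
      thus ?thesis using card_left1[of "Qs mor_beta w" 1] h by blast
    qed
  qed
qed

lemma good_gamma: "good mor_gamma"
  unfolding good_def
proof (intro allI impI)
  fix w :: "nat list" assume h: "1 \<notin> set w" "2 \<le> card {a. \<exists>b. Qs mor_gamma w a b}" "2 \<le> card {b. \<exists>a. Qs mor_gamma w a b}"
  show "graph_tree (bgV (Qs mor_gamma w)) (bgE (Qs mor_gamma w))"
  proof (cases "w = []")
    case True
    have P: "Qs mor_gamma w = (\<lambda>a b. (a, b) \<in> {(1,1),(1,2),(2,1),(2,3),(3,1)})"
      using True by (intro ext) (auto simp: Qs_def A3_def mor_gamma_def sublist_code)
    have V: "bgV (Qs mor_gamma w) = {Inr 3, Inl 3, Inl 2, Inr 2, Inr 1, Inl 1}"
      unfolding P bgV_def by auto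
    show ?thesis unfolding V unfolding P
      apply (rule leafI[where u="Inl 2"], rule leafI[where u="Inr 1"], rule leafI[where u="Inr 1"], rule leafI[where u="Inl 1"], rule leafI[where u="Inl 1"], rule tree_single)
      by auto
  next
    case False
    obtain a b where ab: "Qs mor_gamma w a b" using card_ex[OF h(2)] by blast
    have T: "\<exists>t. mor_gamma c = 1 # t \<and> t \<in> {[], [2], [2,3]}" if "c \<in> A3" for c
      using that by (auto simp: A3_def mor_gamma_def)
    obtain t where t: "t \<in> {[], [2], [2,3]}" "sublist w t"
      using Qs_tail[OF ab h(1) T] by blast
    hence "w = [2] \<or> w = [3] \<or> w = [2,3]" using False by (auto simp: sublist_Cons_right prefix_Cons)
    thus ?thesis
    proof (elim disjE)
      assume "w = [2]"
      hence "Qs mor_gamma w a b \<Longrightarrow> a = 1" for a b by (auto simp: Qs_def A3_def mor_gamma_def sublist_code)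
      thus ?thesis using card_left1[of "Qs mor_gamma w" 1] h by blast
    next
      assume "w = [3]"
      hence "Qs mor_gamma w a b \<Longrightarrow> a = 2" for a b by (auto simp: Qs_def A3_def mor_gamma_def sublist_code)
      thus ?thesis using card_left1[of "Qs mor_gamma w" 2] h by blast
    next
      assume "w = [2,3]"
      hence "Qs mor_gamma w a b \<Longrightarrow> a = 1" for a b by (auto simp: Qs_def A3_def mor_gamma_def sublist_code)
      thus ?thesis using card_left1[of "Qs mor_gamma w" 1] h by blast
    qed
  qed
qed

lemma good_eta: "good mor_eta"
  unfolding good_def
proof (intro allI impI)
  fix w :: "nat list" assume h: "1 \<notin> set w" "2 \<le> card {a. \<exists>b. Qs mor_eta w a b}" "2 \<le> card {b. \<exists>a. Qs mor_eta w a b}"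
  show "graph_tree (bgV (Qs mor_eta w)) (bgE (Qs mor_eta w))"
  proof (cases "w = []")
    case True
    have P: "Qs mor_eta w = (\<lambda>a b. (a, b) \<in> {(1,3),(3,1),(1,2),(2,1),(2,3)})"
      using True by (intro ext) (auto simp: Qs_def A3_def mor_eta_def sublist_code)
    have V: "bgV (Qs mor_eta w) = {Inl 3, Inr 1, Inl 2, Inr 2, Inr 3, Inl 1}"
      unfolding P bgV_def by auto
    show ?thesis unfolding V unfolding P
      apply (rule leafI[where u="Inr 1"], rule leafI[where u="Inl 2"], rule leafI[where u="Inr 3"], rule leafI[where u="Inl 1"], rule leafI[where u="Inl 1"], rule tree_single)
      by auto
  next
    case False
    obtain a b where ab: "Qs mor_eta w a b" using card_ex[OF h(2)] by blast
    have T: "\<exists>t. mor_eta c = 1 # t \<and> t \<in> {[3], [2], [2,3]}" if "c \<in> A3" for c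
      using that by (auto simp: A3_def mor_eta_def)
    obtain t where t: "t \<in> {[3], [2], [2,3]}" "sublist w t"
      using Qs_tail[OF ab h(1) T] by blast
    hence "w = [2] \<or> w = [3] \<or> w = [2,3]" using False by (auto simp: sublist_Cons_right prefix_Cons)
    thus ?thesis
    proof (elim disjE)
      assume "w = [2]"
      hence "Qs mor_eta w a b \<Longrightarrow> a = 1" for a b by (auto simp: Qs_def A3_def mor_eta_def sublist_code)
      thus ?thesis using card_left1[of "Qs mor_eta w" 1] h by blast
    next
      assume "w = [3]"
      hence "Qs mor_eta w a b \<Longrightarrow> b = 1" for a b by (auto simp: Qs_def A3_def mor_eta_def sublist_code)
      thus ?thesis using card_right1[of "Qs mor_eta w" 1] h by blast
    next
      assume "w = [2,3]"
      hence "Qs mor_eta w a b \<Longrightarrow> a = 1" for a b by (auto simp: Qs_def A3_def mor_eta_def sublist_code)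
      thus ?thesis using card_left1[of "Qs mor_eta w" 1] h by blast
    qed
  qed
qed


abbreviation R3 :: "nat \<Rightarrow> nat \<Rightarrow> nat \<Rightarrow> nat \<Rightarrow> nat \<Rightarrow> nat \<Rightarrow> bool" where
  "R3 x m y j a b \<equiv> (a = x \<and> b = y \<and> j = m) \<or> (a = x \<and> b = 3 \<and> j < m) \<or>
   (a = 3 \<and> b = y \<and> j + 1 \<le> m) \<or> (a = 3 \<and> b = 3 \<and> j + 1 < m)"

lemma sub2_12: "sublist [a::nat, b] (1 # 2 # replicate m 3 @ [1]) \<longleftrightarrow> (a = 1 \<and> b = 2) \<or>
   (a = 2 \<and> b = 1 \<and> m = 0) \<or> (a = 2 \<and> b = 3 \<and> 0 < m) \<or> (a = 3 \<and> b = 1 \<and> 1 \<le> m) \<or> (a = 3 \<and> b = 3 \<and> 1 < m)"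
proof -
  have "sublist [a, b] (1 # (2 # replicate m 3 @ [1])) \<longleftrightarrow>
        prefix [a, b] (1 # 2 # replicate m 3 @ [1]) \<or> sublist [a, b] (2 # replicate m 3 @ [1])"
    by (rule sublist_Cons_right)
  moreover have "prefix [a, b] (1 # 2 # replicate m 3 @ [1]) \<longleftrightarrow> a = 1 \<and> b = 2" by simp
  ultimately show ?thesis using repsub0[of 1 a b 2 m] by simp
qed

lemma subj_12: "j \<ge> 1 \<Longrightarrow> sublist ((a::nat) # replicate j 3 @ [b]) (1 # 2 # replicate m 3 @ [1]) \<longleftrightarrow> R3 2 m 1 j a b"
proof -
  assume j: "j \<ge> 1"
  have "sublist (a # replicate j 3 @ [b]) (1 # (2 # replicate m 3 @ [1])) \<longleftrightarrow>
        prefix (a # replicate j 3 @ [b]) (1 # 2 # replicate m 3 @ [1]) \<or> sublist (a # replicate j 3 @ [b]) (2 # replicate m 3 @ [1])"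
    by (rule sublist_Cons_right)
  moreover have "\<not> prefix (replicate j 3 @ [b]) (2 # replicate m 3 @ [1])" using j by (cases j) auto
  ultimately show ?thesis using repsub[of 1 a j b 2 m] by simp
qed

lemma sub_a2: "sublist ((a::nat) # 2 # v) (1 # 2 # rest) \<Longrightarrow> 2 \<notin> set rest \<Longrightarrow> a = 1"
proof -
  assume s: "sublist (a # 2 # v) (1 # 2 # rest)" and r: "2 \<notin> set rest"
  have "prefix (a # 2 # v) (1 # 2 # rest) \<or> sublist (a # 2 # v) (2 # rest)" using s by (simp only: sublist_Cons_right)
  moreover have "\<not> sublist (a # 2 # v) (2 # rest)"
  proof
    assume "sublist (a # 2 # v) (2 # rest)"
    hence "prefix (a # 2 # v) (2 # rest) \<or> sublist (a # 2 # v) rest" by (simp only: sublist_Cons_right)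
    moreover have "\<not> sublist (a # 2 # v) rest"
    proof
      assume "sublist (a # 2 # v) rest"
      hence "set (a # 2 # v) \<subseteq> set rest" by (rule set_mono_sublist)
      thus False using r by simp
    qed
    moreover have "\<not> prefix (a # 2 # v) (2 # rest)" using r by (cases rest) auto
    ultimately show False by blast
  qed
  ultimately show "a = 1" by auto
qed

lemma rep_of_sub: "sublist w (replicate m (3::nat)) \<Longrightarrow> w = replicate (length w) 3"
proof -
  assume "sublist w (replicate m 3)"
  hence "set w \<subseteq> set (replicate m (3::nat))" by (rule set_mono_sublist)
  hence "set w \<subseteq> {3}" by (auto split: if_splits)
  hence "\<forall>y\<in>set w. y = 3" by auto
  from replicate_length_same[OF this] show ?thesis by simp
qed

lemma good_delta: assumes k: "k \<ge> 1" shows "good (mor_delta k)"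
  unfolding good_def
proof (intro allI impI)
  let ?s = "mor_delta k"
  have d1: "?s 1 @ [1] = [1, 1]" by (simp add: mor_delta_def)
  have d2: "?s 2 @ [1] = 1 # 2 # replicate k 3 @ [1]" by (simp add: mor_delta_def)
  have d3: "?s 3 @ [1] = 1 # 2 # replicate (k + 1) 3 @ [1]" by (simp add: mor_delta_def)
  have Qd: "Qs ?s w a b \<longleftrightarrow> sublist (a # w @ [b]) [1, 1] \<or> sublist (a # w @ [b]) (1 # 2 # replicate k 3 @ [1]) \<or>
      sublist (a # w @ [b]) (1 # 2 # replicate (k + 1) 3 @ [1])" for w a b
    unfolding Qs_def A3_def using d1 d2 d3 by auto
  fix w :: "nat list" assume h: "1 \<notin> set w" "2 \<le> card {a. \<exists>b. Qs ?s w a b}" "2 \<le> card {b. \<exists>a. Qs ?s w a b}"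
  show "graph_tree (bgV (Qs ?s w)) (bgE (Qs ?s w))"
  proof (cases "w = []")
    case True
    have P: "Qs ?s w = (\<lambda>a b. (a, b) \<in> {(1,1),(1,2),(2,3),(3,1),(3,3)})"
    proof (intro ext)
      fix a b
      have e: "Qs ?s w a b \<longleftrightarrow> sublist [a, b] [1, 1] \<or> sublist [a, b] (1 # 2 # replicate k 3 @ [1]) \<or>
          sublist [a, b] (1 # 2 # replicate (k + 1) 3 @ [1])" using Qd[of w a b] True by simp
      have e1: "sublist [a, b] [1, 1] \<longleftrightarrow> a = 1 \<and> b = 1" by (auto simp: sublist_code)
      show "Qs ?s w a b = ((a, b) \<in> {(1,1),(1,2),(2,3),(3,1),(3,3)})"
        unfolding e e1 sub2_12 using k by auto
    qed
    have V: "bgV (Qs ?s w) = {Inl 2, Inr 3, Inl 3, Inr 2, Inr 1, Inl 1}"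
      unfolding P bgV_def by auto
    show ?thesis unfolding V unfolding P
      apply (rule leafI[where u="Inr 3"], rule leafI[where u="Inl 3"], rule leafI[where u="Inr 1"],
             rule leafI[where u="Inl 1"], rule leafI[where u="Inl 1"], rule tree_single)
      by auto
  next
    case False
    obtain a b where ab: "Qs ?s w a b" using card_ex[OF h(2)] by blast
    have T: "\<exists>t. ?s c = 1 # t \<and> t \<in> {[], 2 # replicate k 3, 2 # replicate (k + 1) 3}" if "c \<in> A3" for c
      using that by (auto simp: A3_def mor_delta_def)
    obtain t where t: "t \<in> {[], 2 # replicate k 3, 2 # replicate (k + 1) 3}" "sublist w t"
      using Qs_tail[OF ab h(1) T] by blast
    have "t \<noteq> []" using t(2) False by auto
    hence "\<exists>m. t = 2 # replicate m 3" using t(1) by blast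
    then obtain m where "sublist w (2 # replicate m 3)" using t(2) by blast
    hence "prefix w (2 # replicate m 3) \<or> sublist w (replicate m 3)" by (simp only: sublist_Cons_right)
    thus ?thesis
    proof
      assume "prefix w (2 # replicate m 3)"
      then obtain w' where w': "w = 2 # w'" using False by (auto simp: prefix_Cons)
      have "a = 1" if "Qs ?s w a b" for a b
      proof -
        have "sublist (a # 2 # (w' @ [b])) [1, 1] \<or> sublist (a # 2 # (w' @ [b])) (1 # 2 # (replicate k 3 @ [1])) \<or>
            sublist (a # 2 # (w' @ [b])) (1 # 2 # (replicate (k + 1) 3 @ [1]))" using that w' Qd by simp
        moreover have "\<not> sublist (a # 2 # (w' @ [b])) [1, 1]"
        proof
          assume "sublist (a # 2 # (w' @ [b])) [1, 1]"
          from sublist_length_le[OF this] show False by simp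
        qed
        moreover have r: "\<And>m. (2::nat) \<notin> set (replicate m 3 @ [1])" by auto
        ultimately show "a = 1" using sub_a2[OF _ r] by blast
      qed
      thus ?thesis using card_left1[of "Qs ?s w" 1] h by blast
    next
      assume "sublist w (replicate m 3)"
      hence wr: "w = replicate (length w) 3" by (rule rep_of_sub)
      define j where "j = length w"
      have j1: "j \<ge> 1" using False by (cases w) (simp_all add: j_def)
      have Qj: "Qs ?s w a b \<longleftrightarrow> R3 2 k 1 j a b \<or> R3 2 (k + 1) 1 j a b" for a b
      proof -
        have "\<not> sublist (a # replicate j 3 @ [b]) [1, 1]"
        proof
          assume "sublist (a # replicate j 3 @ [b]) [1, 1]"
          from sublist_length_le[OF this] show False using j1 by simp
        qed
        moreover have wj: "w = replicate j 3" using wr by (simp add: j_def)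
        have "Qs ?s w a b \<longleftrightarrow> sublist (a # replicate j 3 @ [b]) [1, 1] \<or> R3 2 k 1 j a b \<or> R3 2 (k + 1) 1 j a b"
          using Qd[of w a b] unfolding wj subj_12[OF j1] .
        ultimately show ?thesis by (simp only: simp_thms)
      qed
      show ?thesis
      proof (cases "j \<le> k")
        case False
        have "a = 2" if "Qs ?s w a b" for a b using that False unfolding Qj by auto
        thus ?thesis using card_left1[of "Qs ?s w" 2] h by blast
      next
        case True
        show ?thesis
        proof (cases "j = k")
          case True
          have P: "Qs ?s w = (\<lambda>a b. (a, b) \<in> {(2,1),(2,3),(3,1)})"
            using True by (intro ext) (auto simp: Qj)
          have V: "bgV (Qs ?s w) = {Inl 3, Inr 3, Inr 1, Inl 2}"
            unfolding P bgV_def by auto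
          show ?thesis unfolding V unfolding P
            apply (rule leafI[where u="Inr 1"], rule leafI[where u="Inl 2"], rule leafI[where u="Inl 2"], rule tree_single)
            by auto
        next
          case False
          have P: "Qs ?s w = (\<lambda>a b. (a, b) \<in> {(2,3),(3,1),(3,3)})"
            using False \<open>j \<le> k\<close> by (intro ext) (auto simp: Qj)
          have V: "bgV (Qs ?s w) = {Inl 2, Inr 3, Inr 1, Inl 3}"
            unfolding P bgV_def by auto
          show ?thesis unfolding V unfolding P
            apply (rule leafI[where u="Inr 3"], rule leafI[where u="Inl 3"], rule leafI[where u="Inl 3"], rule tree_single)
            by auto
        qed
      qed
    qed
  qed
qed


lemma rz0: "sublist [a::nat, b] (1 # replicate m 3 @ [1]) \<longleftrightarrow>
   (a = 1 \<and> b = 1 \<and> m = 0) \<or> (a = 1 \<and> b = 3 \<and> 0 < m) \<or> (a = 3 \<and> b = 1 \<and> 1 \<le> m) \<or> (a = 3 \<and> b = 3 \<and> 1 < m)"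
  using repsub0[of 1 a b 1 m] by simp

lemma rzj: "sublist ((a::nat) # replicate j 3 @ [b]) (1 # replicate m 3 @ [1]) \<longleftrightarrow> R3 1 m 1 j a b"
  using repsub[of 1 a j b 1 m] by simp

lemma good_zeta: assumes k: "k \<ge> 1" shows "good (mor_zeta k)"
  unfolding good_def
proof (intro allI impI)
  let ?s = "mor_zeta k"
  have d1: "?s 1 @ [1] = 1 # replicate k 3 @ [1]" by (simp add: mor_zeta_def)
  have d2: "?s 2 @ [1] = [1, 2, 1]" by (simp add: mor_zeta_def)
  have d3: "?s 3 @ [1] = 1 # replicate (k + 1) 3 @ [1]" by (simp add: mor_zeta_def)
  have Qd: "Qs ?s w a b \<longleftrightarrow> sublist (a # w @ [b]) (1 # replicate k 3 @ [1]) \<or> sublist (a # w @ [b]) [1, 2, 1] \<or>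
      sublist (a # w @ [b]) (1 # replicate (k + 1) 3 @ [1])" for w a b
    unfolding Qs_def A3_def using d1 d2 d3 by auto
  fix w :: "nat list" assume h: "1 \<notin> set w" "2 \<le> card {a. \<exists>b. Qs ?s w a b}" "2 \<le> card {b. \<exists>a. Qs ?s w a b}"
  show "graph_tree (bgV (Qs ?s w)) (bgE (Qs ?s w))"
  proof (cases "w = []")
    case True
    have P: "Qs ?s w = (\<lambda>a b. (a, b) \<in> {(1,3),(3,1),(3,3),(1,2),(2,1)})"
    proof (intro ext)
      fix a b
      have e: "Qs ?s w a b \<longleftrightarrow> sublist [a, b] (1 # replicate k 3 @ [1]) \<or> sublist [a, b] [1, 2, 1] \<or>
          sublist [a, b] (1 # replicate (k + 1) 3 @ [1])" using Qd[of w a b] True by simp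
      have e1: "sublist [a, b] [1, 2, 1] \<longleftrightarrow> (a = 1 \<and> b = 2) \<or> (a = 2 \<and> b = 1)" by (auto simp: sublist_code)
      show "Qs ?s w a b = ((a, b) \<in> {(1,3),(3,1),(3,3),(1,2),(2,1)})"
        unfolding e e1 rz0 using k by auto
    qed
    have V: "bgV (Qs ?s w) = {Inl 2, Inr 1, Inl 3, Inr 2, Inr 3, Inl 1}"
      unfolding P bgV_def by auto
    show ?thesis unfolding V unfolding P
      apply (rule leafI[where u="Inr 1"], rule leafI[where u="Inl 3"], rule leafI[where u="Inr 3"],
             rule leafI[where u="Inl 1"], rule leafI[where u="Inl 1"], rule tree_single)
      by auto
  next
    case False
    obtain a b where ab: "Qs ?s w a b" using card_ex[OF h(2)] by blast
    have T: "\<exists>t. ?s c = 1 # t \<and> t \<in> {replicate k 3, [2], replicate (k + 1) 3}" if "c \<in> A3" for c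
      using that by (auto simp: A3_def mor_zeta_def)
    obtain t where t: "t \<in> {replicate k 3, [2], replicate (k + 1) 3}" "sublist w t"
      using Qs_tail[OF ab h(1) T] by blast
    have "t = [2] \<or> (\<exists>m. t = replicate m 3)" using t(1) by blast
    thus ?thesis
    proof
      assume "t = [2]"
      hence w2: "w = [2]" using t(2) False by (auto simp: sublist_Cons_right prefix_Cons)
      have "a = 1" if "Qs ?s w a b" for a b
      proof -
        have n: "\<not> sublist [a, 2, b] (1 # replicate m 3 @ [1])" for m
        proof
          assume "sublist [a, 2, b] (1 # replicate m 3 @ [1])"
          hence "set [a, 2, b] \<subseteq> set (1 # replicate m 3 @ [1])" by (rule set_mono_sublist)
          thus False by (auto split: if_splits)
        qed
        have n': "\<not> sublist (a # [2] @ [b]) (1 # replicate m 3 @ [1])" for m using n[of m] by simp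
        have "sublist (a # [2] @ [b]) [1, 2, 1]" using that Qd[of w a b] n'[of k] n'[of "k + 1"] unfolding w2 by blast
        thus "a = 1" by (auto simp: sublist_code)
      qed
      thus ?thesis using card_left1[of "Qs ?s w" 1] h by blast
    next
      assume "\<exists>m. t = replicate m 3"
      then obtain m where "sublist w (replicate m 3)" using t(2) by blast
      hence wr: "w = replicate (length w) 3" by (rule rep_of_sub)
      define j where "j = length w"
      have j1: "j \<ge> 1" using False by (cases w) (simp_all add: j_def)
      have Qj: "Qs ?s w a b \<longleftrightarrow> R3 1 k 1 j a b \<or> R3 1 (k + 1) 1 j a b" for a b
      proof -
        have "\<not> sublist (a # replicate j 3 @ [b]) [1, 2, 1]"
        proof
          assume "sublist (a # replicate j 3 @ [b]) [1, 2, 1]"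
          hence "set (a # replicate j 3 @ [b]) \<subseteq> set [1, 2, 1]" by (rule set_mono_sublist)
          thus False using j1 by (auto split: if_splits)
        qed
        moreover have wj: "w = replicate j 3" using wr by (simp add: j_def)
        have "Qs ?s w a b \<longleftrightarrow> R3 1 k 1 j a b \<or> sublist (a # replicate j 3 @ [b]) [1, 2, 1] \<or> R3 1 (k + 1) 1 j a b"
          using Qd[of w a b] unfolding wj rzj .
        ultimately show ?thesis by (simp only: simp_thms)
      qed
      show ?thesis
      proof (cases "j \<le> k")
        case False
        have "a = 1" if "Qs ?s w a b" for a b using that False unfolding Qj by auto
        thus ?thesis using card_left1[of "Qs ?s w" 1] h by blast
      next
        case True
        show ?thesis
        proof (cases "j = k")
          case True
          have P: "Qs ?s w = (\<lambda>a b. (a, b) \<in> {(1,1),(1,3),(3,1)})"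
            using True by (intro ext) (auto simp: Qj)
          have V: "bgV (Qs ?s w) = {Inl 3, Inr 3, Inr 1, Inl 1}"
            unfolding P bgV_def by auto
          show ?thesis unfolding V unfolding P
            apply (rule leafI[where u="Inr 1"], rule leafI[where u="Inl 1"], rule leafI[where u="Inl 1"], rule tree_single)
            by auto
        next
          case False
          have P: "Qs ?s w = (\<lambda>a b. (a, b) \<in> {(1,3),(3,1),(3,3)})"
            using False \<open>j \<le> k\<close> by (intro ext) (auto simp: Qj)
          have V: "bgV (Qs ?s w) = {Inl 1, Inr 3, Inr 1, Inl 3}"
            unfolding P bgV_def by auto
          show ?thesis unfolding V unfolding P
            apply (rule leafI[where u="Inr 3"], rule leafI[where u="Inl 3"], rule leafI[where u="Inl 3"], rule tree_single)
            by auto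
        qed
      qed
    qed
  qed
qed

lemma good_S3: "\<sigma> \<in> S3 \<Longrightarrow> good \<sigma>"
  unfolding S3_def using good_alpha good_beta good_gamma good_eta good_delta good_zeta by auto


context sctx begin

lemma noint_mid: "1 \<notin> set w \<Longrightarrow> 0 < j \<Longrightarrow> j + 1 < length ([a] @ w @ [b]) \<Longrightarrow> ([a] @ w @ [b]) ! j \<noteq> 1"
proof -
  assume h: "1 \<notin> set w" "0 < j" "j + 1 < length ([a] @ w @ [b])"
  have jw: "j - 1 < length w" using h by simp
  have "([a] @ w @ [b]) ! j = w ! (j - 1)" using h jw by (cases j) (auto simp: nth_append)
  moreover have "w ! (j - 1) \<in> set w" using jw by simp
  ultimately show ?thesis using h(1) by auto
qed

lemma finite_left: "finite {a. \<exists>b. [a] @ w @ [b] \<in> lang Y}"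
proof (rule finite_subset[of _ A3])
  show "{a. \<exists>b. [a] @ w @ [b] \<in> lang Y} \<subseteq> A3" using Y_letters by auto
qed (simp add: A3_def)

lemma finite_right: "finite {b. \<exists>a. [a] @ w @ [b] \<in> lang Y}"
proof (rule finite_subset[of _ A3])
  show "{b. \<exists>a. [a] @ w @ [b] \<in> lang Y} \<subseteq> A3" using Y_letters2
    by auto (metis append_assoc append_Cons append_Nil)
qed (simp add: A3_def)

lemma dendric_Y: assumes dp: "\<sigma> \<in> DP X" shows "dendric Y"
  unfolding dendric_def
proof
  fix w assume wY: "w \<in> lang Y"
  define P where "P a b \<longleftrightarrow> [a] @ w @ [b] \<in> lang Y" for a b
  have exab: "\<exists>a b. P a b" using lang_extend[OF wY] by (simp add: P_def)
  have eq: "dendric_word Y w \<longleftrightarrow> graph_tree (bgV P) (bgE P)"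
    using ext_graph_bg[OF wY] by (simp add: P_def[abs_def])
  have fl: "finite {a. \<exists>b. P a b}" using finite_left by (simp add: P_def)
  have fr: "finite {b. \<exists>a. P a b}" using finite_right by (simp add: P_def)
  have nl: "{a. \<exists>b. P a b} \<noteq> {}" using exab by blast
  have nr: "{b. \<exists>a. P a b} \<noteq> {}" using exab by blast
  show "dendric_word Y w"
  proof (cases "card {a. \<exists>b. P a b} < 2")
    case True
    hence "card {a. \<exists>b. P a b} = 1" using fl nl by (simp add: card_gt_0_iff) (metis One_nat_def card_gt_0_iff fl less_2_cases nl not_less_zero)
    then obtain a0 where "{a. \<exists>b. P a b} = {a0}" by (rule card_1_singletonE)
    thus ?thesis using eq star_left[OF fr] by simp
  next
    case nL: False
    show ?thesis
    proof (cases "card {b. \<exists>a. P a b} < 2")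
      case True
      hence "card {b. \<exists>a. P a b} = 1" using fr nr by (metis One_nat_def card_gt_0_iff less_2_cases not_less_zero)
      then obtain b0 where "{b. \<exists>a. P a b} = {b0}" by (rule card_1_singletonE)
      thus ?thesis using eq star_right[OF fl] by simp
    next
      case nR: False
      have bis: "bispecial Y w"
        unfolding bispecial_def left_ext_alt[OF wY] right_ext_alt[OF wY]
        using wY nL nR by (simp add: P_def)
      show ?thesis
      proof (cases "1 \<in> set w")
        case True
        obtain v where "v \<in> lang X" "ext_image X \<sigma> v w" using ext_img[OF wY True] by blast
        thus ?thesis using dp bis unfolding DP_def by blast
      next
        case False
        have PQ: "P = Qs \<sigma> w"
        proof (intro ext)
          fix a b
          have "[a] @ w @ [b] \<in> lang Y \<longleftrightarrow> (\<exists>c\<in>A3. sublist ([a] @ w @ [b]) (\<sigma> c @ [1]))"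
            by (rule lt_char) (rule noint_mid[OF False])
          thus "P a b = Qs \<sigma> w a b" by (simp add: P_def Qs_def)
        qed
        have g: "good \<sigma>" by (rule good_S3[OF sig])
        have "graph_tree (bgV P) (bgE P)"
          using g False nL nR unfolding good_def PQ by auto
        thus ?thesis using eq by simp
      qed
    qed
  qed
qed

end

theorem lemma5p5:
  fixes X :: "(int \<Rightarrow> nat) set" and \<sigma> :: morph
  assumes "shift_space A3 X" and "dendric X" and "\<sigma> \<in> S3"
  shows "dendric (image_shift \<sigma> X) \<longleftrightarrow> \<sigma> \<in> DP X"
proof
  assume d: "dendric (image_shift \<sigma> X)"
  show "\<sigma> \<in> DP X" unfolding DP_def
    using assms(3) d unfolding dendric_def ext_image_def by blast
next
  assume "\<sigma> \<in> DP X"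
  interpret sctx X \<sigma> using assms(1,3) by unfold_locales
  show "dendric (image_shift \<sigma> X)" by (rule dendric_Y) fact
qed


end
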